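(* Let $n\ge2$ and let $F:\mathbf{R}^n\to\mathbf{R}$ be an integrand. (i) $\mathcal{D}(F)$ is the support function of $K_F$, i.e. $\mathcal{D}(F)(x)=\sup_{y\in K_F}\langle x,y\rangle$ for all $x\in\mathbf{R}^n$; in particular $\mathcal{D}(F)$ is convex. Moreover, if $G:\mathbf{R}^n\to\mathbf{R}$ is any convex, 1-homogeneous, positive function with $G\le F$, then $G\le\mathcal{D}(F)$. (ii) For every $v\in\mathbb{S}^{n-1}$ and $\overline{x}\in K_F$ the following are equivalent: (a) $\mathcal{D}(F)(v)=\langle v,\overline{x}\rangle$; (b) $\overline{x}\in\mathcal{D}(F)(v)v+v^\perp$; (c) $\overline{x}+v^\perp$ is a supporting hyperplane for $K_F$. (iii) $\mathrm{Ort}(\partial K_F)\subseteq\mathrm{Cont}(F)$.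
   Context: $\mathbb{S}^{n-1}$ is the unit sphere. A function $G$ is 1-homogeneous if $G(\lambda x)=\lambda G(x)$ for $\lambda\ge0$, positive if $G>0$ on $\mathbb{S}^{n-1}$; an integrand is a lower semicontinuous, 1-homogeneous, positive function. $K_F:=\bigcap_{v\in\mathbb{S}^{n-1}}\{z:\langle z,v\rangle\le F(v)\}$. Operators: $\mathcal{W}(F)(v):=\inf_{w\in\mathbb{S}^{n-1},\langle v,w\rangle>0}F(w)/\langle v,w\rangle$, $\mathcal{A}(G)(v):=\sup_{w\in\mathbb{S}^{n-1}}G(w)\langle v,w\rangle$ for $v\in\mathbb{S}^{n-1}$, extended by 1-homogeneity; $\mathcal{D}(F):=\mathcal{A}(\mathcal{W}(F))$. $\mathrm{Cont}(F):=\{x:F(x)=\mathcal{D}(F)(x)\}$. For $u\ne0$, "$\overline{x}+u^\perp$ is a supporting hyperplane for $K_F$" means $\overline{x}+u^\perp=\{z:\langle z,u\rangle=\max_{y\in K_F}\langle y,u\rangle\}$. For convex $K$ and $y\in\partial K$, $\mathcal{N}_y\partial K:=\{N:\langle N,z-y\rangle\le0\ \forall z\in K\}$; if $\mathcal{N}_y\partial K\cap\mathbb{S}^{n-1}$ is a singleton its element is $N_{\partial K}(y)$; $\mathrm{Ort}(\partial K):=\{v\ne0:\exists y\in\partial K,\ N_{\partial K}(y)\text{ defined and } =v/|v|\}$. *)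

theory Defs
  imports "HOL-Analysis.Analysis"
begin

definition lsc :: "('a::euclidean_space \<Rightarrow> real) \<Rightarrow> bool" where
  "lsc F \<longleftrightarrow> (\<forall>x. \<forall>e>0. eventually (\<lambda>y. F x - e < F y) (at x))"

definition homog1 :: "('a::euclidean_space \<Rightarrow> real) \<Rightarrow> bool" where
  "homog1 G \<longleftrightarrow> (\<forall>x. \<forall>l::real. l \<ge> 0 \<longrightarrow> G (l *\<^sub>R x) = l * G x)"

definition positive_fn :: "('a::euclidean_space \<Rightarrow> real) \<Rightarrow> bool" where
  "positive_fn G \<longleftrightarrow> (\<forall>v \<in> sphere 0 1. G v > 0)"

definition integrand :: "('a::euclidean_space \<Rightarrow> real) \<Rightarrow> bool" where
  "integrand F \<longleftrightarrow> lsc F \<and> homog1 F \<and> positive_fn F"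

definition KF :: "('a::euclidean_space \<Rightarrow> real) \<Rightarrow> 'a set" where
  "KF F = (\<Inter>v \<in> sphere 0 1. {z. z \<bullet> v \<le> F v})"

definition hom_ext :: "('a::euclidean_space \<Rightarrow> real) \<Rightarrow> 'a \<Rightarrow> real" where
  "hom_ext g x = (if x = 0 then 0 else norm x * g (x /\<^sub>R norm x))"

definition Wop :: "('a::euclidean_space \<Rightarrow> real) \<Rightarrow> 'a \<Rightarrow> real" where
  "Wop F = hom_ext (\<lambda>v. Inf {F w / (v \<bullet> w) | w. w \<in> sphere 0 1 \<and> v \<bullet> w > 0})"

definition Aop :: "('a::euclidean_space \<Rightarrow> real) \<Rightarrow> 'a \<Rightarrow> real" where
  "Aop G = hom_ext (\<lambda>v. Sup {G w * (v \<bullet> w) | w. w \<in> sphere 0 1})"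

definition Dop :: "('a::euclidean_space \<Rightarrow> real) \<Rightarrow> 'a \<Rightarrow> real" where
  "Dop F = Aop (Wop F)"

definition Cont :: "('a::euclidean_space \<Rightarrow> real) \<Rightarrow> 'a set" where
  "Cont F = {x. F x = Dop F x}"

text \<open>\<open>xb + u\<^sup>\<perp>\<close> is a supporting hyperplane for K (the maximum is attained).\<close>
definition supporting_hyperplane :: "'a::euclidean_space set \<Rightarrow> 'a \<Rightarrow> 'a \<Rightarrow> bool" where
  "supporting_hyperplane K xb u \<longleftrightarrow> u \<noteq> 0 \<and>
     (\<exists>m. (\<exists>y\<in>K. y \<bullet> u = m) \<and> (\<forall>y\<in>K. y \<bullet> u \<le> m) \<and>
          {xb + w | w. w \<bullet> u = 0} = {z. z \<bullet> u = m})"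

definition normal_cone :: "'a::euclidean_space set \<Rightarrow> 'a \<Rightarrow> 'a set" where
  "normal_cone K y = {N. \<forall>z\<in>K. N \<bullet> (z - y) \<le> 0}"

definition Ort :: "'a::euclidean_space set \<Rightarrow> 'a set" where
  "Ort K = {v. v \<noteq> 0 \<and> (\<exists>y \<in> frontier K. normal_cone K y \<inter> sphere 0 1 = {v /\<^sub>R norm v})}"

end

theory Submission
  imports Defs "HOL-Analysis.Analysis"
begin

lemma lsc_bound:
  fixes F :: "'a::euclidean_space \<Rightarrow> real"
  assumes "lsc F" "\<forall>w\<in>sphere 0 1. y \<bullet> w < F w"
  shows "\<exists>\<delta>>0. \<forall>w\<in>sphere 0 1. y \<bullet> w + \<delta> \<le> F w"
proof (rule ccontr)
  assume "\<not> ?thesis"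
  then have "\<forall>n::nat. \<exists>w\<in>sphere 0 1. F w < y \<bullet> w + 1 / real (Suc n)"
    by (metis not_le of_nat_0_less_iff zero_less_Suc zero_less_divide_1_iff)
  then obtain f where f: "\<And>n. f n \<in> sphere 0 1" "\<And>n. F (f n) < y \<bullet> f n + 1 / real (Suc n)"
    by metis
  obtain l r where l: "l \<in> sphere 0 1" "strict_mono r" "(f \<circ> r) \<longlonglongrightarrow> l"
    using seq_compactE[OF compact_imp_seq_compact[OF compact_sphere]] f(1) by metis
  define e where "e = (F l - y \<bullet> l) / 2"
  have e: "e > 0" using assms(2) l(1) by (simp add: e_def)
  have "eventually (\<lambda>z. F l - e < F z) (at l)" using assms(1) e unfolding lsc_def by blast
  then obtain d where d: "d > 0" "\<And>z. z \<noteq> l \<Longrightarrow> dist z l < d \<Longrightarrow> F l - e < F z"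
    unfolding eventually_at by auto
  define d' where "d' = min d (e / (2 * (norm y + 1)))"
  have d': "d' > 0" using d e by (simp add: d'_def) (smt (verit) norm_ge_zero divide_pos_pos)
  have key: "F z - y \<bullet> z > e / 2" if "dist z l < d'" for z
  proof -
    have "\<bar>y \<bullet> z - y \<bullet> l\<bar> \<le> norm y * norm (z - l)"
      by (metis Cauchy_Schwarz_ineq2 inner_diff_right)
    also have "\<dots> \<le> norm y * (e / (2 * (norm y + 1)))"
      using that by (intro mult_left_mono) (auto simp: d'_def dist_norm)
    also have "\<dots> \<le> e / 2"
    proof -
      have "norm y * (e / (2 * (norm y + 1))) = (e/2) * (norm y / (norm y + 1))" by simp
      also have "\<dots> \<le> (e/2) * 1" using e by (intro mult_left_mono) (auto simp: divide_le_eq, smt (verit) norm_ge_zero)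
      finally show ?thesis by simp
    qed
    finally have 1: "\<bar>y \<bullet> z - y \<bullet> l\<bar> \<le> e / 2" .
    show ?thesis
    proof (cases "z = l")
      case True then show ?thesis using e by (simp add: e_def)
    next
      case False
      then have "F l - e < F z" using d(2) that by (simp add: d'_def)
      then show ?thesis using abs_le_D1[OF 1] e unfolding e_def by (simp add: field_simps)
    qed
  qed
  obtain N1 where N1: "inverse (real (Suc N1)) < e / 2" using reals_Archimedean[of "e/2"] e by auto
  obtain N2 where N2: "\<And>n. n \<ge> N2 \<Longrightarrow> dist ((f \<circ> r) n) l < d'"
    using tendstoD[OF l(3) d'] unfolding eventually_sequentially by auto
  define n where "n = max N1 N2"
  have "r n \<ge> n" using l(2) seq_suble by blast
  then have "r n \<ge> N1" by (simp add: n_def)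
  then have "1 / real (Suc (r n)) \<le> inverse (real (Suc N1))"
    by (simp add: divide_inverse frac_le)
  then have "F (f (r n)) < y \<bullet> f (r n) + e / 2" using f(2)[of "r n"] N1 by linarith
  moreover have "F (f (r n)) - y \<bullet> f (r n) > e / 2" using key N2[of n] by (simp add: n_def)
  ultimately show False by linarith
qed

lemma KF_mem: "z \<in> KF F \<longleftrightarrow> (\<forall>v\<in>sphere 0 1. z \<bullet> v \<le> F v)"
  by (auto simp: KF_def)

lemma KF_zero: "positive_fn F \<Longrightarrow> 0 \<in> KF F"
  by (auto simp: KF_mem positive_fn_def less_imp_le)

lemma KF_closed: "closed (KF F)"
  unfolding KF_def
  by (intro closed_INT) (simp add: closed_halfspace_le inner_commute[of _ "v" for v])

lemma KF_norm:
  fixes F :: "'a::euclidean_space \<Rightarrow> real"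
  assumes "y \<in> KF F"
  shows "norm y \<le> (\<Sum>b\<in>Basis. \<bar>F b\<bar> + \<bar>F (- b)\<bar>)"
proof -
  have "\<bar>y \<bullet> b\<bar> \<le> \<bar>F b\<bar> + \<bar>F (- b)\<bar>" if "b \<in> Basis" for b
  proof -
    have "b \<in> sphere 0 1" "- b \<in> sphere 0 1" using that by auto
    then have "y \<bullet> b \<le> F b" "y \<bullet> (- b) \<le> F (- b)" using assms unfolding KF_mem by blast+
    then show ?thesis by auto
  qed
  then have "(\<Sum>b\<in>Basis. \<bar>y \<bullet> b\<bar>) \<le> (\<Sum>b\<in>Basis. \<bar>F b\<bar> + \<bar>F (- b)\<bar>)"
    by (intro sum_mono) auto
  then show ?thesis using norm_le_l1[of y] by linarith
qed

lemma KF_bdd: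
  fixes F :: "'a::euclidean_space \<Rightarrow> real"
  shows "bdd_above {x \<bullet> y | y. y \<in> KF F}"
proof -
  let ?M = "(\<Sum>b\<in>Basis. \<bar>F b\<bar> + \<bar>F (- b)\<bar>)"
  have "x \<bullet> y \<le> norm x * ?M" if "y \<in> KF F" for y
  proof -
    have "x \<bullet> y \<le> norm x * norm y" by (rule norm_cauchy_schwarz)
    also have "\<dots> \<le> norm x * ?M" using KF_norm[OF that] by (intro mult_left_mono) auto
    finally show ?thesis .
  qed
  then show ?thesis unfolding bdd_above_def by blast
qed

lemma supp_upper:
  fixes F :: "'a::euclidean_space \<Rightarrow> real"
  shows "y \<in> KF F \<Longrightarrow> x \<bullet> y \<le> Sup {x \<bullet> y | y. y \<in> KF F}"
  by (rule cSup_upper[OF _ KF_bdd]) auto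

lemma supp_ne: "positive_fn F \<Longrightarrow> {x \<bullet> y | y. y \<in> KF F} \<noteq> {}"
  using KF_zero by blast

lemma supp_least:
  fixes F :: "'a::euclidean_space \<Rightarrow> real"
  assumes "positive_fn F" "\<And>y. y \<in> KF F \<Longrightarrow> x \<bullet> y \<le> c"
  shows "Sup {x \<bullet> y | y. y \<in> KF F} \<le> c"
  using assms by (intro cSup_least[OF supp_ne]) auto

lemma supp_scale:
  fixes F :: "'a::euclidean_space \<Rightarrow> real"
  assumes "positive_fn F" "c > 0"
  shows "Sup {(c *\<^sub>R x) \<bullet> y | y. y \<in> KF F} = c * Sup {x \<bullet> y | y. y \<in> KF F}"
proof (rule antisym)
  show "Sup {(c *\<^sub>R x) \<bullet> y | y. y \<in> KF F} \<le> c * Sup {x \<bullet> y | y. y \<in> KF F}"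
    using assms supp_upper[of _ F x] by (intro supp_least) (auto intro: mult_left_mono)
  have "Sup {x \<bullet> y | y. y \<in> KF F} \<le> Sup {(c *\<^sub>R x) \<bullet> y | y. y \<in> KF F} / c"
  proof (rule supp_least[OF assms(1)])
    fix y assume "y \<in> KF F"
    then have "(c *\<^sub>R x) \<bullet> y \<le> Sup {(c *\<^sub>R x) \<bullet> y | y. y \<in> KF F}" by (rule supp_upper)
    then show "x \<bullet> y \<le> Sup {(c *\<^sub>R x) \<bullet> y | y. y \<in> KF F} / c"
      using assms(2) by (simp add: pos_le_divide_eq mult.commute)
  qed
  then show "c * Sup {x \<bullet> y | y. y \<in> KF F} \<le> Sup {(c *\<^sub>R x) \<bullet> y | y. y \<in> KF F}"
    using assms(2) by (simp add: pos_le_divide_eq mult.commute)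
qed

lemma supp_le_F:
  fixes F :: "'a::euclidean_space \<Rightarrow> real"
  assumes "positive_fn F" "v \<in> sphere 0 1"
  shows "Sup {v \<bullet> y | y. y \<in> KF F} \<le> F v"
  using assms by (intro supp_least) (auto simp: KF_mem inner_commute)

lemma supp_convex:
  fixes F :: "'a::euclidean_space \<Rightarrow> real"
  assumes "positive_fn F"
  shows "convex_on UNIV (\<lambda>x. Sup {x \<bullet> y | y. y \<in> KF F})"
proof (rule convex_onI)
  fix t :: real and x z :: 'a assume t: "t > 0" "t < 1"
  show "Sup {((1 - t) *\<^sub>R x + t *\<^sub>R z) \<bullet> y | y. y \<in> KF F}
        \<le> (1 - t) * Sup {x \<bullet> y | y. y \<in> KF F} + t * Sup {z \<bullet> y | y. y \<in> KF F}"
  proof (rule supp_least[OF assms])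
    fix y assume y: "y \<in> KF F"
    have "((1 - t) *\<^sub>R x + t *\<^sub>R z) \<bullet> y = (1 - t) * (x \<bullet> y) + t * (z \<bullet> y)"
      by (simp add: inner_add_left)
    also have "\<dots> \<le> (1 - t) * Sup {x \<bullet> y | y. y \<in> KF F} + t * Sup {z \<bullet> y | y. y \<in> KF F}"
      using t supp_upper[OF y, of x] supp_upper[OF y, of z]
      by (intro add_mono mult_left_mono) auto
    finally show "((1 - t) *\<^sub>R x + t *\<^sub>R z) \<bullet> y \<le> \<dots>" .
  qed
qed simp


definition rr :: "('a::euclidean_space \<Rightarrow> real) \<Rightarrow> 'a \<Rightarrow> real" where
  "rr F w = Inf {F w' / (w \<bullet> w') | w'. w' \<in> sphere 0 1 \<and> w \<bullet> w' > 0}"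

lemma Wop_rr: "w \<in> sphere 0 1 \<Longrightarrow> Wop F w = rr F w"
  by (cases "w = 0") (auto simp: Wop_def hom_ext_def rr_def)

lemma sphere_inner_self: "w \<in> sphere (0::'a::euclidean_space) 1 \<Longrightarrow> w \<bullet> w = 1"
  by (simp add: dot_square_norm)

lemma rr_props:
  fixes F :: "'a::euclidean_space \<Rightarrow> real"
  assumes F: "positive_fn F" and w: "w \<in> sphere 0 1"
  shows "rr F w \<ge> 0"
    and "\<And>w'. w' \<in> sphere 0 1 \<Longrightarrow> w \<bullet> w' > 0 \<Longrightarrow> rr F w \<le> F w' / (w \<bullet> w')"
    and "rr F w *\<^sub>R w \<in> KF F"
proof -
  let ?T = "{F w' / (w \<bullet> w') | w'. w' \<in> sphere 0 1 \<and> w \<bullet> w' > 0}"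
  have ne: "?T \<noteq> {}" using w sphere_inner_self[OF w] by auto
  have pos: "\<forall>t\<in>?T. 0 \<le> t" using F by (auto simp: positive_fn_def less_imp_le)
  then have bdd: "bdd_below ?T" unfolding bdd_below_def by blast
  show r0: "rr F w \<ge> 0" unfolding rr_def using pos by (intro cInf_greatest[OF ne]) auto
  show r1: "\<And>w'. w' \<in> sphere 0 1 \<Longrightarrow> w \<bullet> w' > 0 \<Longrightarrow> rr F w \<le> F w' / (w \<bullet> w')"
    unfolding rr_def by (rule cInf_lower[OF _ bdd]) auto
  show "rr F w *\<^sub>R w \<in> KF F"
    unfolding KF_mem
  proof
    fix v :: 'a assume v: "v \<in> sphere 0 1"
    show "rr F w *\<^sub>R w \<bullet> v \<le> F v"
    proof (cases "w \<bullet> v > 0")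
      case True
      then have "rr F w * (w \<bullet> v) \<le> F v" using r1[OF v True] by (simp add: pos_le_divide_eq)
      then show ?thesis by simp
    next
      case False
      then have "rr F w * (w \<bullet> v) \<le> 0" using r0 by (simp add: mult_nonneg_nonpos)
      moreover have "F v > 0" using F v by (auto simp: positive_fn_def)
      ultimately show ?thesis by simp
    qed
  qed
qed

lemma rr_ge_norm:
  fixes F :: "'a::euclidean_space \<Rightarrow> real"
  assumes y: "y \<in> KF F" "y \<noteq> 0"
  shows "norm y \<le> rr F (y /\<^sub>R norm y)"
proof -
  let ?w = "y /\<^sub>R norm y"
  have w: "?w \<in> sphere 0 1" using y by simp
  let ?T = "{F w' / (?w \<bullet> w') | w'. w' \<in> sphere 0 1 \<and> ?w \<bullet> w' > 0}"
  have "F ?w / (?w \<bullet> ?w) \<in> ?T" using w sphere_inner_self[OF w] by (intro CollectI exI[of _ ?w]) simp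
  then have ne: "?T \<noteq> {}" by blast
  show ?thesis unfolding rr_def
  proof (rule cInf_greatest[OF ne])
    fix t assume "t \<in> ?T"
    then obtain w' where w': "w' \<in> sphere 0 1" "?w \<bullet> w' > 0" "t = F w' / (?w \<bullet> w')" by blast
    have 1: "y \<bullet> w' \<le> F w'" using y(1) w'(1) by (simp add: KF_mem)
    have ny: "norm y \<noteq> 0" using y(2) by simp
    have 2: "norm y * (?w \<bullet> w') = y \<bullet> w'" using ny by simp
    have "norm y * (?w \<bullet> w') \<le> F w'" unfolding 2 by (rule 1)
    then show "norm y \<le> t" using w' pos_le_divide_eq[OF w'(2)] by simp
  qed
qed

lemma D_unit:
  fixes F :: "'a::euclidean_space \<Rightarrow> real"
  assumes F: "positive_fn F" and u: "u \<in> sphere 0 1"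
  shows "Sup {rr F w * (u \<bullet> w) | w. w \<in> sphere 0 1} = Sup {u \<bullet> y | y. y \<in> KF F}"
proof -
  let ?A = "{u \<bullet> y | y. y \<in> KF F}" and ?B = "{rr F w * (u \<bullet> w) | w. w \<in> sphere 0 1}"
  have hB: "b \<le> Sup ?A" if "b \<in> ?B" for b
  proof -
    obtain w where w: "w \<in> sphere 0 1" "b = rr F w * (u \<bullet> w)" using \<open>b \<in> ?B\<close> by blast
    have "b = u \<bullet> (rr F w *\<^sub>R w)" using w by simp
    also have "\<dots> \<le> Sup ?A" by (rule supp_upper[OF rr_props(3)[OF F w(1)]])
    finally show ?thesis .
  qed
  have neB: "?B \<noteq> {}" using u by blast
  have bddB: "bdd_above ?B" using hB unfolding bdd_above_def by blast
  show ?thesis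
  proof (rule antisym)
    show "Sup ?B \<le> Sup ?A" using hB by (intro cSup_least[OF neB]) auto
    show "Sup ?A \<le> Sup ?B"
    proof (rule supp_least[OF F])
      fix y assume y: "y \<in> KF F"
      show "u \<bullet> y \<le> Sup ?B"
      proof (cases "u \<bullet> y \<le> 0")
        case True
        have "rr F u * (u \<bullet> u) \<in> ?B" using u by blast
        then have "rr F u * (u \<bullet> u) \<le> Sup ?B" by (rule cSup_upper[OF _ bddB])
        then show ?thesis using True rr_props(1)[OF F u] sphere_inner_self[OF u] by simp
      next
        case False
        then have y0: "y \<noteq> 0" by auto
        let ?w = "y /\<^sub>R norm y"
        have w: "?w \<in> sphere 0 1" using y0 by simp
        have uw: "u \<bullet> ?w > 0" using False y0 by simp
        have "u \<bullet> y = norm y * (u \<bullet> ?w)" using y0 by simp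
        also have "\<dots> \<le> rr F ?w * (u \<bullet> ?w)"
          using rr_ge_norm[OF y y0] uw by (intro mult_right_mono) auto
        also have "\<dots> \<le> Sup ?B" using w by (intro cSup_upper[OF _ bddB]) blast
        finally show ?thesis .
      qed
    qed
  qed
qed

lemma Dop_supp:
  fixes F :: "'a::euclidean_space \<Rightarrow> real"
  assumes F: "positive_fn F"
  shows "Dop F x = Sup {x \<bullet> y | y. y \<in> KF F}"
proof (cases "x = 0")
  case True
  have "{x \<bullet> y | y. y \<in> KF F} = {0}" using True KF_zero[OF F] by auto
  then show ?thesis using True by (simp add: Dop_def Aop_def hom_ext_def)
next
  case False
  let ?u = "x /\<^sub>R norm x"
  have u: "?u \<in> sphere 0 1" using False by simp
  have eq: "{Wop F w * (?u \<bullet> w) | w. w \<in> sphere 0 1} = {rr F w * (?u \<bullet> w) | w. w \<in> sphere 0 1}"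
    unfolding Setcompr_eq_image by (rule image_cong) (simp_all add: Wop_rr)
  have "Dop F x = norm x * Sup {Wop F w * (?u \<bullet> w) | w. w \<in> sphere 0 1}"
    using False by (simp add: Dop_def Aop_def hom_ext_def)
  also have "\<dots> = norm x * Sup {?u \<bullet> y | y. y \<in> KF F}" unfolding eq D_unit[OF F u] ..
  also have "\<dots> = Sup {(norm x *\<^sub>R ?u) \<bullet> y | y. y \<in> KF F}"
    using False by (intro supp_scale[symmetric] F) auto
  also have "norm x *\<^sub>R ?u = x" using False by simp
  finally show ?thesis .
qed


lemma subgrad:
  fixes G :: "'a::euclidean_space \<Rightarrow> real"
  assumes G: "convex_on UNIV G"
  shows "\<exists>g. \<forall>z. G x + g \<bullet> (z - x) \<le> G z"
proof -
  define S where "S = {(z - x, t - G x) | z t. G z < t}"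
  have cS: "convex S"
    unfolding convex_alt
  proof (intro ballI allI impI)
    fix p q :: "'a \<times> real" and u :: real
    assume p: "p \<in> S" and q: "q \<in> S" and u: "0 \<le> u \<and> u \<le> 1"
    obtain z1 t1 where 1: "p = (z1 - x, t1 - G x)" "G z1 < t1" using p by (auto simp: S_def)
    obtain z2 t2 where 2: "q = (z2 - x, t2 - G x)" "G z2 < t2" using q by (auto simp: S_def)
    have "G ((1 - u) *\<^sub>R z1 + u *\<^sub>R z2) \<le> (1 - u) * G z1 + u * G z2"
      using convex_onD[OF G, of u z1 z2] u by auto
    also have "\<dots> < (1 - u) * t1 + u * t2"
    proof (cases "u = 0")
      case True then show ?thesis using 1 by simp
    next
      case False
      then have "u * G z2 < u * t2" using u 2 by simp
      moreover have "(1 - u) * G z1 \<le> (1 - u) * t1" using u 1 by (intro mult_left_mono) auto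
      ultimately show ?thesis by linarith
    qed
    finally have lt: "G ((1 - u) *\<^sub>R z1 + u *\<^sub>R z2) < (1 - u) * t1 + u * t2" .
    have "(1 - u) *\<^sub>R p + u *\<^sub>R q = (((1 - u) *\<^sub>R z1 + u *\<^sub>R z2) - x, ((1 - u) * t1 + u * t2) - G x)"
      using 1 2 by (simp add: algebra_simps)
    then show "(1 - u) *\<^sub>R p + u *\<^sub>R q \<in> S" using lt unfolding S_def by blast
  qed
  have "0 \<notin> S" unfolding S_def by (auto simp: zero_prod_def)
  then obtain a where a: "a \<noteq> 0" "\<forall>p\<in>S. 0 \<le> inner a p"
    using separating_hyperplane_set_0[OF cS] by blast
  obtain y c where ac: "a = (y, c)" by (cases a)
  have H: "0 \<le> y \<bullet> (z - x) + c * (t - G x)" if "G z < t" for z t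
  proof -
    have "(z - x, t - G x) \<in> S" using that unfolding S_def by blast
    then show ?thesis using a(2) ac by auto
  qed
  have c0: "c \<ge> 0" using H[of x "G x + 1"] by simp
  have "c \<noteq> 0"
  proof
    assume "c = 0"
    then have "0 \<le> y \<bullet> ((x - y) - x)" using H[of "x - y" "G (x - y) + 1"] by simp
    then have "y \<bullet> y \<le> 0" by simp
    then have "y = 0" by (metis inner_gt_zero_iff not_le)
    then show False using a(1) ac \<open>c = 0\<close> by (simp add: zero_prod_def)
  qed
  then have c: "c > 0" using c0 by simp
  have q: "0 \<le> y \<bullet> (z - x) + c * (G z - G x)" for z
  proof (rule ccontr)
    let ?q = "y \<bullet> (z - x) + c * (G z - G x)"
    assume "\<not> ?thesis"
    then have qn: "?q < 0" by simp
    have "G z < G z + (- ?q / (2 * c))" using qn c by (simp add: divide_pos_pos)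
    from H[OF this] have "0 \<le> y \<bullet> (z - x) + c * (G z + (- ?q / (2 * c)) - G x)" .
    also have "\<dots> = ?q / 2" using c by (simp add: field_simps)
    finally show False using qn by simp
  qed
  show ?thesis
  proof (intro exI allI)
    fix z
    have "(- (y \<bullet> (z - x))) / c \<le> G z - G x"
      unfolding pos_divide_le_eq[OF c] using q[of z] by (simp add: algebra_simps)
    then show "G x + (- (1 / c) *\<^sub>R y) \<bullet> (z - x) \<le> G z" by simp
  qed
qed

lemma G_le:
  fixes F G :: "'a::euclidean_space \<Rightarrow> real"
  assumes F: "positive_fn F" and G: "convex_on UNIV G" "homog1 G" "\<forall>x. G x \<le> F x"
  shows "G x \<le> Dop F x"
proof -
  obtain g where g: "\<And>z. G x + g \<bullet> (z - x) \<le> G z" using subgrad[OF G(1)] by blast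
  have G0: "G 0 = 0" using G(2) unfolding homog1_def by (metis scale_zero_left mult_zero_left order_refl)
  have G2: "G (2 *\<^sub>R x) = 2 * G x" using G(2) unfolding homog1_def by simp
  have "G x \<le> g \<bullet> x" using g[of 0] G0 by simp
  moreover have "g \<bullet> x \<le> G x" using g[of "2 *\<^sub>R x"] G2 by (simp add: algebra_simps)
  ultimately have gx: "G x = g \<bullet> x" by simp
  have "g \<in> KF F"
    unfolding KF_mem
  proof
    fix w :: 'a assume "w \<in> sphere 0 1"
    have "G x + g \<bullet> (w - x) \<le> G w" by (rule g)
    then have "g \<bullet> w \<le> G w" using gx by (simp add: inner_diff_right inner_commute)
    then show "g \<bullet> w \<le> F w" using G(3) by (metis order_trans)
  qed
  then have "x \<bullet> g \<le> Sup {x \<bullet> y | y. y \<in> KF F}" by (rule supp_upper)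
  then show ?thesis using gx Dop_supp[OF F] by (simp add: inner_commute)
qed


lemma Ort_Cont:
  fixes F :: "'a::euclidean_space \<Rightarrow> real"
  assumes F: "integrand F"
  shows "Ort (KF F) \<subseteq> Cont F"
proof
  fix v assume "v \<in> Ort (KF F)"
  then obtain y where v: "v \<noteq> 0" and y: "y \<in> frontier (KF F)"
    and nc: "normal_cone (KF F) y \<inter> sphere 0 1 = {v /\<^sub>R norm v}"
    unfolding Ort_def by blast
  have Fp: "positive_fn F" and Fl: "lsc F" and Fh: "homog1 F" using F by (auto simp: integrand_def)
  have yK: "y \<in> KF F" using y frontier_subset_closed[OF KF_closed] by blast
  have "\<exists>w\<in>sphere 0 1. y \<bullet> w = F w"
  proof (rule ccontr)
    assume "\<not> ?thesis"
    then have "\<forall>w\<in>sphere 0 1. y \<bullet> w < F w" using yK by (force simp: KF_mem)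
    then obtain d where d: "d > 0" "\<forall>w\<in>sphere 0 1. y \<bullet> w + d \<le> F w"
      using lsc_bound[OF Fl] by blast
    have "ball y d \<subseteq> KF F"
    proof
      fix z assume "z \<in> ball y d"
      then have zd: "norm (z - y) < d" by (simp add: dist_norm norm_minus_commute)
      show "z \<in> KF F" unfolding KF_mem
      proof
        fix w :: 'a assume w: "w \<in> sphere 0 1"
        have "(z - y) \<bullet> w \<le> norm (z - y) * norm w" by (rule norm_cauchy_schwarz)
        then have "(z - y) \<bullet> w \<le> d" using w zd by simp
        then have "z \<bullet> w \<le> y \<bullet> w + d" by (simp add: inner_diff_left)
        then show "z \<bullet> w \<le> F w" using d(2) w by force
      qed
    qed
    then have "y \<in> interior (KF F)" using d(1) mem_interior by blast
    then show False using y by (simp add: frontier_def)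
  qed
  then obtain w where w: "w \<in> sphere 0 1" "y \<bullet> w = F w" by blast
  have "w \<in> normal_cone (KF F) y"
    unfolding normal_cone_def
  proof (intro CollectI ballI)
    fix z assume "z \<in> KF F"
    then have "z \<bullet> w \<le> F w" using w(1) by (simp add: KF_mem)
    then show "w \<bullet> (z - y) \<le> 0" using w(2) by (simp add: inner_diff_right inner_commute)
  qed
  then have wu: "w = v /\<^sub>R norm v" using nc w(1) by blast
  let ?u = "v /\<^sub>R norm v"
  have u: "?u \<in> sphere 0 1" using v by simp
  have "F ?u = y \<bullet> ?u" using w wu by simp
  also have "\<dots> = ?u \<bullet> y" by (simp add: inner_commute)
  also have "\<dots> \<le> Sup {?u \<bullet> y | y. y \<in> KF F}" by (rule supp_upper[OF yK])
  finally have "F ?u \<le> Sup {?u \<bullet> y | y. y \<in> KF F}" .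
  then have Fu: "F ?u = Sup {?u \<bullet> y | y. y \<in> KF F}" using supp_le_F[OF Fp u] by simp
  have vv: "norm v *\<^sub>R ?u = v" using v by simp
  have "F v = norm v * F ?u" using Fh unfolding homog1_def by (metis vv norm_ge_zero)
  also have "\<dots> = Sup {(norm v *\<^sub>R ?u) \<bullet> y | y. y \<in> KF F}"
    unfolding Fu using v by (intro supp_scale[symmetric] Fp) auto
  also have "\<dots> = Dop F v" unfolding vv by (rule Dop_supp[OF Fp, symmetric])
  finally show "v \<in> Cont F" by (simp add: Cont_def)
qed

lemma part_ii:
  fixes F :: "'a::euclidean_space \<Rightarrow> real"
  assumes Fp: "positive_fn F" and v: "v \<in> sphere 0 1" and xb: "xb \<in> KF F"
  shows "(Dop F v = v \<bullet> xb \<longleftrightarrow> xb \<in> {Dop F v *\<^sub>R v + w | w. w \<bullet> v = 0})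
          \<and> (Dop F v = v \<bullet> xb \<longleftrightarrow> supporting_hyperplane (KF F) xb v)"
proof
  have vv: "v \<bullet> v = 1" by (rule sphere_inner_self[OF v])
  show "Dop F v = v \<bullet> xb \<longleftrightarrow> xb \<in> {Dop F v *\<^sub>R v + w | w. w \<bullet> v = 0}"
  proof
    assume h: "Dop F v = v \<bullet> xb"
    have "xb = Dop F v *\<^sub>R v + (xb - Dop F v *\<^sub>R v)" by simp
    moreover have "(xb - Dop F v *\<^sub>R v) \<bullet> v = 0" using h vv by (simp add: inner_diff_left inner_commute[of xb v])
    ultimately show "xb \<in> {Dop F v *\<^sub>R v + w | w. w \<bullet> v = 0}" by blast
  next
    assume "xb \<in> {Dop F v *\<^sub>R v + w | w. w \<bullet> v = 0}"
    then obtain w where "xb = Dop F v *\<^sub>R v + w" "w \<bullet> v = 0" by blast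
    then show "Dop F v = v \<bullet> xb" using vv by (simp add: inner_add_right inner_commute)
  qed
  have D: "Dop F v = Sup {v \<bullet> y | y. y \<in> KF F}" by (rule Dop_supp[OF Fp])
  show "Dop F v = v \<bullet> xb \<longleftrightarrow> supporting_hyperplane (KF F) xb v"
  proof
    assume h: "Dop F v = v \<bullet> xb"
    have v0: "v \<noteq> 0" using v by auto
    have le: "\<forall>y\<in>KF F. y \<bullet> v \<le> v \<bullet> xb"
      using supp_upper[of _ F v] h D by (simp add: inner_commute)
    have eq: "{xb + w | w. w \<bullet> v = 0} = {z. z \<bullet> v = v \<bullet> xb}"
    proof (intro set_eqI iffI)
      fix z assume "z \<in> {xb + w | w. w \<bullet> v = 0}"
      then show "z \<in> {z. z \<bullet> v = v \<bullet> xb}" by (auto simp: inner_add_left inner_commute[of xb v])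
    next
      fix z assume z: "z \<in> {z. z \<bullet> v = v \<bullet> xb}"
      have "z = xb + (z - xb)" by simp
      moreover have "(z - xb) \<bullet> v = 0" using z by (simp add: inner_diff_left inner_commute[of xb v])
      ultimately show "z \<in> {xb + w | w. w \<bullet> v = 0}" by blast
    qed
    show "supporting_hyperplane (KF F) xb v"
      unfolding supporting_hyperplane_def
      using v0 xb le eq by (intro conjI exI[of _ "v \<bullet> xb"]) (auto simp: inner_commute[of xb v])
  next
    assume "supporting_hyperplane (KF F) xb v"
    then obtain m where m: "\<exists>y\<in>KF F. y \<bullet> v = m" "\<forall>y\<in>KF F. y \<bullet> v \<le> m"
      "{xb + w | w. w \<bullet> v = 0} = {z. z \<bullet> v = m}"
      unfolding supporting_hyperplane_def by blast
    have "xb + 0 \<in> {xb + w | w. w \<bullet> v = 0}" by (intro CollectI exI[of _ 0]) simp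
    then have xm: "xb \<bullet> v = m" using m(3) by simp
    obtain y0 where y0: "y0 \<in> KF F" "y0 \<bullet> v = m" using m(1) by blast
    have "Sup {v \<bullet> y | y. y \<in> KF F} = m"
    proof (rule antisym)
      show "Sup {v \<bullet> y | y. y \<in> KF F} \<le> m"
        using m(2) by (intro supp_least[OF Fp]) (simp add: inner_commute[of v])
      show "m \<le> Sup {v \<bullet> y | y. y \<in> KF F}"
        using supp_upper[OF y0(1), of v] y0(2) by (simp add: inner_commute[of y0 v])
    qed
    then show "Dop F v = v \<bullet> xb" using D xm by (simp add: inner_commute[of xb v])
  qed
qed

theorem lemma2p3:
  fixes F :: "'a::euclidean_space \<Rightarrow> real"
  assumes "DIM('a) \<ge> 2"
    and "integrand F"
  shows "(\<forall>x. Dop F x = Sup {x \<bullet> y | y. y \<in> KF F})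
       \<and> convex_on UNIV (Dop F)
       \<and> (\<forall>G. convex_on UNIV G \<and> homog1 G \<and> positive_fn G \<and> (\<forall>x. G x \<le> F x)
              \<longrightarrow> (\<forall>x. G x \<le> Dop F x))
       \<and> (\<forall>v \<in> sphere 0 1. \<forall>xb \<in> KF F.
            (Dop F v = v \<bullet> xb \<longleftrightarrow> xb \<in> {Dop F v *\<^sub>R v + w | w. w \<bullet> v = 0})
          \<and> (Dop F v = v \<bullet> xb \<longleftrightarrow> supporting_hyperplane (KF F) xb v))
       \<and> Ort (KF F) \<subseteq> Cont F"
proof -
  have Fp: "positive_fn F" using assms(2) by (simp add: integrand_def)
  have D: "Dop F = (\<lambda>x. Sup {x \<bullet> y | y. y \<in> KF F})" using Dop_supp[OF Fp] by blast
  show ?thesis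
  proof (intro conjI allI impI ballI)
    show "\<And>x. Dop F x = Sup {x \<bullet> y | y. y \<in> KF F}" by (rule Dop_supp[OF Fp])
    show "convex_on UNIV (Dop F)" unfolding D by (rule supp_convex[OF Fp])
    show "\<And>G x. convex_on UNIV G \<and> homog1 G \<and> positive_fn G \<and> (\<forall>x. G x \<le> F x) \<Longrightarrow> G x \<le> Dop F x"
      using G_le[OF Fp] by blast
    show "\<And>v xb. v \<in> sphere 0 1 \<Longrightarrow> xb \<in> KF F \<Longrightarrow> (Dop F v = v \<bullet> xb) = (xb \<in> {Dop F v *\<^sub>R v + w |w. w \<bullet> v = 0})"
      using part_ii[OF Fp] by blast
    show "\<And>v xb. v \<in> sphere 0 1 \<Longrightarrow> xb \<in> KF F \<Longrightarrow> (Dop F v = v \<bullet> xb) = supporting_hyperplane (KF F) xb v"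
      using part_ii[OF Fp] by blast
    show "Ort (KF F) \<subseteq> Cont F" by (rule Ort_Cont[OF assms(2)])
  qed
qed

end
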